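(* For an integer $n\ge 3$ and a finite simple graph $H$ without a universal vertex, $${\rm dim}_s(K_{n,n}^{-M}\diamond H)=2n\sum_{j=1}^{k(H)}t_j(H)-n\,k(H).$$
   Context: The modular product $G\diamond H$ has vertex set $V(G)\times V(H)$; distinct vertices $(g,h)$ and $(g',h')$ are adjacent iff ($g=g'$ and $hh'\in E(H)$), or ($gg'\in E(G)$ and $h=h'$), or ($gg'\in E(G)$ and $hh'\in E(H)$), or ($g\neq g'$, $h\neq h'$, $gg'\notin E(G)$ and $hh'\notin E(H)$). $K_{n,n}^{-M}$ is the complete bipartite graph $K_{n,n}$ with a perfect matching removed. A vertex is universal if its closed neighborhood is the whole vertex set. Vertices $h,h'$ are twins if $N_H[h]=N_H[h']$. A $\gamma_H$-pair is a set $\{h,h'\}$ of two distinct vertices with $N_H[h]\cap N_H[h']=\emptyset$ and $N_H[h]\cup N_H[h']=V(H)$. Let $T_1(H),\dots,T_{k(H)}(H)$ be the partition of $V(H)$ in which each twin class of vertices not belonging to any $\gamma_H$-pair is one part, and for each $\gamma_H$-pair $\{h,h'\}$ the union of the twin classes of $h$ and of $h'$ is one part; $t_j(H)=|T_j(H)|$. ${\rm dim}_s(X)$ is the strong metric dimension: the minimum size of $S\subseteq V(X)$ such that for all distinct $x,y$ some $z\in S$ has $d_X(y,z)=d_X(y,x)+d_X(x,z)$ or $d_X(x,z)=d_X(x,y)+d_X(y,z)$. *)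

theory Defs
  imports Main "HOL-Library.Extended_Nat"
begin

definition simple_graph :: "'a set \<Rightarrow> ('a \<Rightarrow> 'a \<Rightarrow> bool) \<Rightarrow> bool" where
  "simple_graph V E \<longleftrightarrow> finite V \<and> (\<forall>x y. E x y \<longrightarrow> x \<in> V \<and> y \<in> V)
     \<and> (\<forall>x y. E x y \<longrightarrow> E y x) \<and> (\<forall>x. \<not> E x x)"

inductive walk :: "('a \<Rightarrow> 'a \<Rightarrow> bool) \<Rightarrow> nat \<Rightarrow> 'a \<Rightarrow> 'a \<Rightarrow> bool" for E where
  walk0: "walk E 0 x x"
| walkS: "E x y \<Longrightarrow> walk E k y z \<Longrightarrow> walk E (Suc k) x z"

text \<open>Graph distance; infinite if no walk exists.\<close>
definition gdist :: "'a set \<Rightarrow> ('a \<Rightarrow> 'a \<Rightarrow> bool) \<Rightarrow> 'a \<Rightarrow> 'a \<Rightarrow> enat" where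
  "gdist V E x y = (INF k \<in> {k. walk (\<lambda>u v. u \<in> V \<and> v \<in> V \<and> E u v) k x y}. enat k)"

definition strong_resolving :: "'a set \<Rightarrow> ('a \<Rightarrow> 'a \<Rightarrow> bool) \<Rightarrow> 'a set \<Rightarrow> bool" where
  "strong_resolving V E S \<longleftrightarrow> S \<subseteq> V \<and>
     (\<forall>x\<in>V. \<forall>y\<in>V. x \<noteq> y \<longrightarrow>
        (\<exists>z\<in>S. gdist V E y z = gdist V E y x + gdist V E x z
              \<or> gdist V E x z = gdist V E x y + gdist V E y z))"

definition strong_metric_dim :: "'a set \<Rightarrow> ('a \<Rightarrow> 'a \<Rightarrow> bool) \<Rightarrow> nat" where
  "strong_metric_dim V E = (LEAST k. \<exists>S. strong_resolving V E S \<and> card S = k)"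

definition mod_prod_adj :: "('a \<Rightarrow> 'a \<Rightarrow> bool) \<Rightarrow> ('b \<Rightarrow> 'b \<Rightarrow> bool)
    \<Rightarrow> ('a \<times> 'b) \<Rightarrow> ('a \<times> 'b) \<Rightarrow> bool" where
  "mod_prod_adj EG EH = (\<lambda>(g,h) (g',h'). (g,h) \<noteq> (g',h') \<and>
     ((g = g' \<and> EH h h') \<or> (EG g g' \<and> h = h') \<or> (EG g g' \<and> EH h h')
      \<or> (g \<noteq> g' \<and> h \<noteq> h' \<and> \<not> EG g g' \<and> \<not> EH h h')))"

text \<open>K_{n,n} minus a perfect matching: vertices (i,b) with i<n, b a side;
  (i,b) ~ (j,c) iff b \<noteq> c and i \<noteq> j.\<close>
definition Knn_M_verts :: "nat \<Rightarrow> (nat \<times> bool) set" where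
  "Knn_M_verts n = {..<n} \<times> UNIV"

definition Knn_M_adj :: "nat \<Rightarrow> (nat \<times> bool) \<Rightarrow> (nat \<times> bool) \<Rightarrow> bool" where
  "Knn_M_adj n = (\<lambda>(i,b) (j,c). i < n \<and> j < n \<and> b \<noteq> c \<and> i \<noteq> j)"

definition cnbh :: "'a set \<Rightarrow> ('a \<Rightarrow> 'a \<Rightarrow> bool) \<Rightarrow> 'a \<Rightarrow> 'a set" where
  "cnbh V E h = insert h {x \<in> V. E h x}"

definition universal :: "'a set \<Rightarrow> ('a \<Rightarrow> 'a \<Rightarrow> bool) \<Rightarrow> 'a \<Rightarrow> bool" where
  "universal V E h \<longleftrightarrow> cnbh V E h = V"

definition twin_class :: "'a set \<Rightarrow> ('a \<Rightarrow> 'a \<Rightarrow> bool) \<Rightarrow> 'a \<Rightarrow> 'a set" where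
  "twin_class V E h = {x \<in> V. cnbh V E x = cnbh V E h}"

definition gamma_pair :: "'a set \<Rightarrow> ('a \<Rightarrow> 'a \<Rightarrow> bool) \<Rightarrow> 'a \<Rightarrow> 'a \<Rightarrow> bool" where
  "gamma_pair V E h h' \<longleftrightarrow> h \<in> V \<and> h' \<in> V \<and> h \<noteq> h' \<and>
     cnbh V E h \<inter> cnbh V E h' = {} \<and> cnbh V E h \<union> cnbh V E h' = V"

text \<open>The partition T_1(H),...,T_k(H), represented as a set of parts.\<close>
definition T_parts :: "'a set \<Rightarrow> ('a \<Rightarrow> 'a \<Rightarrow> bool) \<Rightarrow> 'a set set" where
  "T_parts V E =
     {twin_class V E h | h. h \<in> V \<and> \<not> (\<exists>h'. gamma_pair V E h h')}
   \<union> {twin_class V E h \<union> twin_class V E h' | h h'. gamma_pair V E h h'}"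

end

theory Submission
  imports Defs
begin


lemma walk_Suc_iff: "walk R (Suc k) x z \<longleftrightarrow> (\<exists>y. R x y \<and> walk R k y z)"
  by (auto elim: walk.cases intro: walk.intros)
lemma walk_0_iff: "walk R 0 x z \<longleftrightarrow> x = z"
  by (auto elim: walk.cases intro: walk.intros)

lemma walk_trans: "walk R k x y \<Longrightarrow> walk R m y z \<Longrightarrow> walk R (k+m) x z"
  by (induction rule: walk.induct) (auto intro: walk.intros)

lemma walk_snoc: "walk R k x y \<Longrightarrow> R y z \<Longrightarrow> walk R (Suc k) x z"
  using walk_trans[of R k x y 1 z] by (simp add: walk_Suc_iff walk_0_iff)

lemma walk_rev: assumes "\<And>a b. R a b \<Longrightarrow> R b a" shows "walk R k x y \<Longrightarrow> walk R k y x"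
  by (induction rule: walk.induct) (auto intro: walk.intros walk_snoc assms)

lemma gdist_le: "walk (\<lambda>u v. u \<in> V \<and> v \<in> V \<and> E u v) k x y \<Longrightarrow> gdist V E x y \<le> enat k"
  unfolding gdist_def by (rule INF_lower) simp

lemma gdist_less: assumes "gdist V E x y < enat k"
  shows "\<exists>m<k. walk (\<lambda>u v. u \<in> V \<and> v \<in> V \<and> E u v) m x y"
proof (rule ccontr)
  assume "\<not> ?thesis"
  hence "enat k \<le> gdist V E x y" unfolding gdist_def
    by (intro INF_greatest) (auto simp: not_less)
  with assms show False by simp
qed

lemma gdist_ex: assumes "gdist V E x y = enat k"
  shows "walk (\<lambda>u v. u \<in> V \<and> v \<in> V \<and> E u v) k x y"
proof -
  from assms have "gdist V E x y < enat (Suc k)" by simp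
  from gdist_less[OF this] obtain m where m: "m < Suc k" "walk (\<lambda>u v. u \<in> V \<and> v \<in> V \<and> E u v) m x y"
    by blast
  from m(2) have "gdist V E x y \<le> enat m" by (rule gdist_le)
  with assms have "k \<le> m" by simp
  with m(1) have "m = k" by simp
  with m(2) show ?thesis by simp
qed

lemma gdist_self: "gdist V E x x = 0"
proof -
  have "walk (\<lambda>u v. u \<in> V \<and> v \<in> V \<and> E u v) 0 x x" by (simp add: walk_0_iff)
  hence "gdist V E x x \<le> enat 0" by (rule gdist_le)
  thus ?thesis by (simp add: zero_enat_def[symmetric])
qed

lemma gdist_triangle: "gdist V E x z \<le> gdist V E x y + gdist V E y z"
proof (cases "gdist V E x y")
  case (enat a) note a = this
  show ?thesis
  proof (cases "gdist V E y z")
    case (enat b)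
    have "walk (\<lambda>u v. u \<in> V \<and> v \<in> V \<and> E u v) (a+b) x z"
      by (rule walk_trans[OF gdist_ex[OF a] gdist_ex[OF enat]])
    thus ?thesis using gdist_le a enat by fastforce
  qed (simp)
qed simp

lemma gdist_sym: assumes "\<And>a b. E a b \<Longrightarrow> E b a"
  shows "gdist V E x y = gdist V E y x"
proof -
  have *: "gdist V E a b \<le> gdist V E b a" for a b
  proof (cases "gdist V E b a")
    case (enat k)
    have "walk (\<lambda>u v. u \<in> V \<and> v \<in> V \<and> E u v) k a b"
      by (rule walk_rev[OF _ gdist_ex[OF enat]]) (auto intro: assms)
    then show ?thesis using gdist_le[of V E k a b] enat by simp
  qed simp
  show ?thesis using *[of x y] *[of y x] by simp
qed

lemma gdist_first: assumes "gdist V E x z = enat (Suc m)"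
  shows "\<exists>w. x \<in> V \<and> w \<in> V \<and> E x w \<and> gdist V E w z \<le> enat m"
proof -
  from gdist_ex[OF assms] obtain w where "x \<in> V" "w \<in> V" "E x w"
     "walk (\<lambda>u v. u \<in> V \<and> v \<in> V \<and> E u v) m w z" by (auto simp: walk_Suc_iff)
  thus ?thesis using gdist_le[of V E m w z] by blast
qed

lemma gdist_ge1: "x \<noteq> y \<Longrightarrow> 1 \<le> gdist V E x y"
  using gdist_less[of V E x y 1] by (auto simp: walk_0_iff one_enat_def not_less[symmetric])

lemma gdist_ge2: assumes "x \<noteq> y" "\<not> (x \<in> V \<and> y \<in> V \<and> E x y)" shows "2 \<le> gdist V E x y"
proof (rule ccontr)
  assume "\<not> ?thesis"
  hence "gdist V E x y < enat 2" by (simp add: numeral_eq_enat)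
  from gdist_less[OF this] obtain m where "m < 2" "walk (\<lambda>u v. u \<in> V \<and> v \<in> V \<and> E u v) m x y" by blast
  moreover have "m = 0 \<or> m = Suc 0" using \<open>m < 2\<close> by linarith
  ultimately show False using assms by (auto simp: walk_0_iff walk_Suc_iff)
qed

lemma gdist_ge3: assumes "x \<noteq> y" "\<not> (x \<in> V \<and> y \<in> V \<and> E x y)"
   "\<not> (\<exists>w. x \<in> V \<and> w \<in> V \<and> y \<in> V \<and> E x w \<and> E w y)" shows "3 \<le> gdist V E x y"
proof (rule ccontr)
  assume "\<not> ?thesis"
  hence "gdist V E x y < enat 3" by (simp add: numeral_eq_enat)
  from gdist_less[OF this] obtain m where "m < 3" "walk (\<lambda>u v. u \<in> V \<and> v \<in> V \<and> E u v) m x y" by blast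
  moreover have "m = 0 \<or> m = Suc 0 \<or> m = Suc (Suc 0)" using \<open>m < 3\<close> by linarith
  ultimately show False using assms by (auto simp: walk_0_iff walk_Suc_iff)
qed


lemma gdist_zero_iff: "gdist V E x y = 0 \<longleftrightarrow> x = y"
  by (metis gdist_self gdist_ge1 not_one_le_zero)

lemma mmd_aux:
  assumes sym: "\<And>a b. E a b \<Longrightarrow> E b a"
    and fin: "gdist V E x z \<noteq> \<infinity>" "gdist V E x y \<noteq> \<infinity>"
    and mmd: "\<And>w. x \<in> V \<Longrightarrow> w \<in> V \<Longrightarrow> E x w \<Longrightarrow> gdist V E w y \<le> gdist V E x y"
    and zx: "z \<noteq> x"
    and eq: "gdist V E y z = gdist V E y x + gdist V E x z"
  shows False
proof -
  obtain k where k: "gdist V E x z = enat k" using fin(1) by auto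
  have "k \<noteq> 0" using k zx gdist_zero_iff[of V E x z] by (auto simp: zero_enat_def)
  then obtain m where m: "k = Suc m" by (cases k) auto
  obtain a where a: "gdist V E x y = enat a" using fin(2) by auto
  from gdist_first[OF k[unfolded m]] obtain w where w: "x \<in> V" "w \<in> V" "E x w" "gdist V E w z \<le> enat m"
    by blast
  have t: "gdist V E y z \<le> gdist V E y w + gdist V E w z" by (rule gdist_triangle)
  have "gdist V E y w = gdist V E w y" by (rule gdist_sym[OF sym])
  also have "gdist V E w y \<le> enat a" using mmd[OF w(1-3)] a by simp
  finally have yw: "gdist V E y w \<le> enat a" .
  have "gdist V E y z \<le> enat a + enat m" using order_trans[OF t add_mono[OF yw w(4)]] .
  hence "gdist V E y z \<le> enat (a + m)" by simp
  moreover have "gdist V E y x = gdist V E x y" by (rule gdist_sym[OF sym])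
  hence "gdist V E y x = enat a" using a by simp
  ultimately show False using eq k m by simp
qed

lemma mmd_pair:
  assumes sym: "\<And>a b. E a b \<Longrightarrow> E b a"
    and S: "strong_resolving V E S"
    and xy: "x \<in> V" "y \<in> V" "x \<noteq> y"
    and fin: "\<And>a b. a \<in> V \<Longrightarrow> b \<in> V \<Longrightarrow> gdist V E a b \<noteq> \<infinity>"
    and mx: "\<And>w. x \<in> V \<Longrightarrow> w \<in> V \<Longrightarrow> E x w \<Longrightarrow> gdist V E w y \<le> gdist V E x y"
    and my: "\<And>w. y \<in> V \<Longrightarrow> w \<in> V \<Longrightarrow> E y w \<Longrightarrow> gdist V E w x \<le> gdist V E y x"
  shows "x \<in> S \<or> y \<in> S"
proof (rule ccontr)
  assume nS: "\<not> ?thesis"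
  from S xy obtain z where z: "z \<in> S" and
    r: "gdist V E y z = gdist V E y x + gdist V E x z \<or> gdist V E x z = gdist V E x y + gdist V E y z"
    unfolding strong_resolving_def by blast
  have zV: "z \<in> V" using S z unfolding strong_resolving_def by blast
  have zx: "z \<noteq> x" "z \<noteq> y" using nS z by auto
  from r show False
  proof
    assume "gdist V E y z = gdist V E y x + gdist V E x z"
    thus False using mmd_aux[OF sym fin[OF xy(1) zV] fin[OF xy(1) xy(2)] mx zx(1)] by blast
  next
    assume "gdist V E x z = gdist V E x y + gdist V E y z"
    thus False using mmd_aux[OF sym fin[OF xy(2) zV] fin[OF xy(2) xy(1)] my zx(2)] by blast
  qed
qed


definition rel :: "'a set \<Rightarrow> ('a \<Rightarrow> 'a \<Rightarrow> bool) \<Rightarrow> 'a \<Rightarrow> 'a \<Rightarrow> bool" where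
  "rel VH EH u v \<longleftrightarrow> cnbh VH EH u = cnbh VH EH v \<or>
     (cnbh VH EH u \<inter> cnbh VH EH v = {} \<and> cnbh VH EH u \<union> cnbh VH EH v = VH)"

definition part :: "'a set \<Rightarrow> ('a \<Rightarrow> 'a \<Rightarrow> bool) \<Rightarrow> 'a \<Rightarrow> 'a set" where
  "part VH EH u = {v \<in> VH. rel VH EH u v}"

context fixes VH :: "'a set" and EH assumes sg: "simple_graph VH EH"
begin

lemma sgE: "finite VH" "EH x y \<Longrightarrow> x \<in> VH" "EH x y \<Longrightarrow> y \<in> VH" "EH x y \<Longrightarrow> EH y x" "\<not> EH x x"
  using sg unfolding simple_graph_def by blast+

lemma mem_cnbh: "x \<in> cnbh VH EH u \<longleftrightarrow> x = u \<or> (x \<in> VH \<and> EH u x)"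
  unfolding cnbh_def by auto

lemma cnbh_sub: "u \<in> VH \<Longrightarrow> cnbh VH EH u \<subseteq> VH"
  unfolding cnbh_def by auto

lemma comp_iff: assumes "u \<in> VH" "v \<in> VH"
  shows "(cnbh VH EH u \<inter> cnbh VH EH v = {} \<and> cnbh VH EH u \<union> cnbh VH EH v = VH) \<longleftrightarrow>
     cnbh VH EH v = VH - cnbh VH EH u"
  using cnbh_sub[OF assms(1)] cnbh_sub[OF assms(2)] by blast

lemma rel_refl: "rel VH EH u u" unfolding rel_def by simp

lemma rel_sym: "rel VH EH u v \<Longrightarrow> rel VH EH v u" unfolding rel_def by blast

lemma rel_trans: assumes "u \<in> VH" "v \<in> VH" "w \<in> VH" "rel VH EH u v" "rel VH EH v w"
  shows "rel VH EH u w"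
proof -
  have cu: "cnbh VH EH u \<subseteq> VH" and cv: "cnbh VH EH v \<subseteq> VH" and cw: "cnbh VH EH w \<subseteq> VH"
    using cnbh_sub assms by auto
  show ?thesis using assms(4,5) cu cv cw unfolding rel_def by blast
qed

lemma part_sub: "part VH EH u \<subseteq> VH" unfolding part_def by auto

lemma part_self: "u \<in> VH \<Longrightarrow> u \<in> part VH EH u" unfolding part_def by (simp add: rel_refl)

lemma part_eq: assumes "u \<in> VH" "v \<in> part VH EH u" shows "part VH EH v = part VH EH u"
proof -
  have v: "v \<in> VH" "rel VH EH u v" using assms unfolding part_def by auto
  show ?thesis unfolding part_def
    using rel_trans[OF assms(1) v(1)] rel_trans[OF v(1) assms(1)] v(2) rel_sym by blast
qed

lemma part_rel: assumes "u \<in> VH" "v \<in> VH" "part VH EH u = part VH EH v" shows "rel VH EH u v"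
  using part_self[OF assms(2)] assms(3) unfolding part_def by auto

lemma part_disj: assumes "u \<in> VH" "v \<in> VH" "part VH EH u \<noteq> part VH EH v"
  shows "part VH EH u \<inter> part VH EH v = {}"
proof (rule ccontr)
  assume "\<not> ?thesis"
  then obtain w where "w \<in> part VH EH u" "w \<in> part VH EH v" by blast
  thus False using part_eq[OF assms(1)] part_eq[OF assms(2)] assms(3) by metis
qed

lemma not_self_comp: "u \<in> VH \<Longrightarrow> \<not> (cnbh VH EH u \<inter> cnbh VH EH u = {})"
  unfolding cnbh_def by auto

lemma T_parts_eq: "T_parts VH EH = part VH EH ` VH"
proof
  show "T_parts VH EH \<subseteq> part VH EH ` VH"
  proof
    fix T assume "T \<in> T_parts VH EH"
    then consider (a) h where "T = twin_class VH EH h" "h \<in> VH" "\<not> (\<exists>h'. gamma_pair VH EH h h')"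
      | (b) h h' where "T = twin_class VH EH h \<union> twin_class VH EH h'" "gamma_pair VH EH h h'"
      unfolding T_parts_def by blast
    then show "T \<in> part VH EH ` VH"
    proof cases
      case a
      have "T = part VH EH h"
      proof (rule set_eqI)
        fix v
        show "v \<in> T \<longleftrightarrow> v \<in> part VH EH h"
        proof
          assume "v \<in> T" thus "v \<in> part VH EH h" using a unfolding twin_class_def part_def rel_def by auto
        next
          assume v: "v \<in> part VH EH h"
          hence vV: "v \<in> VH" and r: "rel VH EH h v" unfolding part_def by auto
          have "cnbh VH EH h = cnbh VH EH v"
          proof (rule ccontr)
            assume ne: "cnbh VH EH h \<noteq> cnbh VH EH v"
            with r have c: "cnbh VH EH h \<inter> cnbh VH EH v = {} \<and> cnbh VH EH h \<union> cnbh VH EH v = VH"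
              unfolding rel_def by blast
            have "h \<noteq> v" using ne by auto
            hence "gamma_pair VH EH h v" using c a(2) vV unfolding gamma_pair_def by auto
            with a(3) show False by blast
          qed
          thus "v \<in> T" using a vV unfolding twin_class_def by auto
        qed
      qed
      thus ?thesis using a(2) by blast
    next
      case b
      have hV: "h \<in> VH" "h' \<in> VH" and c: "cnbh VH EH h' = VH - cnbh VH EH h"
        using b(2) comp_iff unfolding gamma_pair_def by auto
      have "T = part VH EH h"
      proof (rule set_eqI)
        fix v
        show "v \<in> T \<longleftrightarrow> v \<in> part VH EH h"
          using b(1) c comp_iff[OF hV(1)] unfolding twin_class_def part_def rel_def by auto
      qed
      thus ?thesis using hV by blast
    qed
  qed
next
  show "part VH EH ` VH \<subseteq> T_parts VH EH"
  proof
    fix T assume "T \<in> part VH EH ` VH"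
    then obtain h where h: "h \<in> VH" "T = part VH EH h" by blast
    show "T \<in> T_parts VH EH"
    proof (cases "\<exists>h'. gamma_pair VH EH h h'")
      case True
      then obtain h' where g: "gamma_pair VH EH h h'" by blast
      have hV: "h' \<in> VH" and c: "cnbh VH EH h' = VH - cnbh VH EH h"
        using g comp_iff h(1) unfolding gamma_pair_def by auto
      have "T = twin_class VH EH h \<union> twin_class VH EH h'"
      proof (rule set_eqI)
        fix v
        show "v \<in> T \<longleftrightarrow> v \<in> twin_class VH EH h \<union> twin_class VH EH h'"
          using h c comp_iff[OF h(1)] unfolding twin_class_def part_def rel_def by auto
      qed
      thus ?thesis using g unfolding T_parts_def by blast
    next
      case False
      have "T = twin_class VH EH h"
      proof (rule set_eqI)
        fix v
        show "v \<in> T \<longleftrightarrow> v \<in> twin_class VH EH h"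
        proof
          assume v: "v \<in> T"
          hence vV: "v \<in> VH" and r: "rel VH EH h v" using h unfolding part_def by auto
          have "cnbh VH EH h = cnbh VH EH v"
          proof (rule ccontr)
            assume ne: "cnbh VH EH h \<noteq> cnbh VH EH v"
            with r have c: "cnbh VH EH h \<inter> cnbh VH EH v = {} \<and> cnbh VH EH h \<union> cnbh VH EH v = VH"
              unfolding rel_def by blast
            have "h \<noteq> v" using ne by auto
            hence "gamma_pair VH EH h v" using c h(1) vV unfolding gamma_pair_def by auto
            with False show False by blast
          qed
          thus "v \<in> twin_class VH EH h" using vV unfolding twin_class_def by auto
        next
          assume "v \<in> twin_class VH EH h" thus "v \<in> T" using h unfolding twin_class_def part_def rel_def by auto
        qed
      qed
      thus ?thesis using False h(1) unfolding T_parts_def by blast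
    qed
  qed
qed

lemma sum_parts: "(\<Sum>T\<in>part VH EH ` VH. card T) = card VH"
proof -
  have "card (\<Union>(part VH EH ` VH)) = (\<Sum>T\<in>part VH EH ` VH. card T)"
  proof (rule card_Union_disjoint)
    show "pairwise disjnt (part VH EH ` VH)"
      unfolding pairwise_def disjnt_def using part_disj by blast
    show "\<And>A. A \<in> part VH EH ` VH \<Longrightarrow> finite A"
      using part_sub sgE(1) finite_subset by blast
  qed
  moreover have "\<Union>(part VH EH ` VH) = VH" using part_sub part_self by blast
  ultimately show ?thesis by simp
qed

lemma card_parts_le: "card (part VH EH ` VH) \<le> card VH"
  by (rule card_image_le[OF sgE(1)])

end


lemma pick3: assumes "3 \<le> (n::nat)" shows "\<exists>l<n. l \<noteq> i \<and> l \<noteq> j"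
proof (cases "0 \<noteq> i \<and> 0 \<noteq> j")
  case True thus ?thesis using assms by (intro exI[of _ 0]) auto
next
  case F1: False
  show ?thesis
  proof (cases "1 \<noteq> i \<and> 1 \<noteq> j")
    case True thus ?thesis using assms by (intro exI[of _ 1]) auto
  next
    case False thus ?thesis using F1 assms by (intro exI[of _ 2]) auto
  qed
qed

locale mp =
  fixes n :: nat and VH :: "'a set" and EH :: "'a \<Rightarrow> 'a \<Rightarrow> bool"
  assumes n3: "3 \<le> n" and sg: "simple_graph VH EH"
begin

abbreviation "V \<equiv> Knn_M_verts n \<times> VH"
abbreviation "E \<equiv> mod_prod_adj (Knn_M_adj n) EH"
abbreviation "d \<equiv> gdist V E"

lemmas sgE = sgE[OF sg]

lemma EH_irr[simp]: "\<not> EH x x" using sgE(5) by blast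

lemma EH_commute: "EH x y = EH y x" using sgE(4) by blast

lemma inK[simp]: "(i,b) \<in> Knn_M_verts n \<longleftrightarrow> i < n"
  unfolding Knn_M_verts_def by auto

lemma inV[simp]: "((i,b),h) \<in> V \<longleftrightarrow> i < n \<and> h \<in> VH"
  unfolding Knn_M_verts_def by auto

lemma E_iff: "E ((i,b),h) ((j,c),h') \<longleftrightarrow> (i \<noteq> j \<or> b \<noteq> c \<or> h \<noteq> h') \<and>
   ((i = j \<and> b = c \<and> EH h h') \<or> (i < n \<and> j < n \<and> b \<noteq> c \<and> i \<noteq> j \<and> (h = h' \<or> EH h h'))
    \<or> ((i \<noteq> j \<or> b \<noteq> c) \<and> h \<noteq> h' \<and> \<not> (i < n \<and> j < n \<and> b \<noteq> c \<and> i \<noteq> j) \<and> \<not> EH h h'))"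
  unfolding mod_prod_adj_def Knn_M_adj_def by auto

lemma E_sym: "E x y \<Longrightarrow> E y x"
  unfolding mod_prod_adj_def Knn_M_adj_def using sgE(4) by (auto split: prod.splits)

lemma finV: "finite V"
  unfolding Knn_M_verts_def using sgE(1) by simp

lemma cardV: "card V = 2 * n * card VH"
  unfolding Knn_M_verts_def by (simp add: card_cartesian_product)

lemma le1: assumes "x \<in> V" "y \<in> V" "E x y" shows "d x y \<le> 1"
proof -
  have "walk (\<lambda>u v. u \<in> V \<and> v \<in> V \<and> E u v) (Suc 0) x y"
    by (rule walkS[where y=y]) (auto simp: assms intro: walk0)
  from gdist_le[OF this] show ?thesis by (simp add: one_enat_def)
qed

lemma le2: assumes "x \<in> V" "a \<in> V" "y \<in> V" "E x a" "E a y" shows "d x y \<le> 2"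
proof -
  have "walk (\<lambda>u v. u \<in> V \<and> v \<in> V \<and> E u v) (Suc (Suc 0)) x y"
    by (rule walkS[where y=a], simp add: assms, rule walkS[where y=y]) (auto simp: assms intro: walk0)
  from gdist_le[OF this] show ?thesis by (simp add: numeral_eq_enat numeral_2_eq_2)
qed

lemma le3: assumes "x \<in> V" "a \<in> V" "b \<in> V" "y \<in> V" "E x a" "E a b" "E b y" shows "d x y \<le> 3"
proof -
  have "walk (\<lambda>u v. u \<in> V \<and> v \<in> V \<and> E u v) (Suc (Suc (Suc 0))) x y"
    by (rule walkS[where y=a], simp add: assms, rule walkS[where y=b], simp add: assms,
        rule walkS[where y=y]) (auto simp: assms intro: walk0)
  from gdist_le[OF this] show ?thesis by (simp add: numeral_eq_enat numeral_3_eq_3)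
qed

lemma enat_le_trans3: "(a::enat) \<le> 1 \<Longrightarrow> a \<le> 3" "(a::enat) \<le> 2 \<Longrightarrow> a \<le> 3"
  by (auto simp: numeral_eq_enat one_enat_def elim!: order_trans)

lemma diam: assumes "x \<in> V" "y \<in> V" shows "d x y \<le> 3"
proof -
  obtain i b h where x: "x = ((i,b),h)" by (cases x) auto
  obtain j c h' where y: "y = ((j,c),h')" by (cases y) auto
  have V: "i < n" "j < n" "h \<in> VH" "h' \<in> VH" using assms unfolding x y by simp_all
  show ?thesis
  proof (cases "x = y")
    case True thus ?thesis by (simp add: gdist_self)
  next
    case ne: False
    show ?thesis
    proof (cases "E x y")
      case True thus ?thesis using le1 assms enat_le_trans3 by blast
    next
      case nE: False
      obtain l where l: "l < n" "l \<noteq> i" "l \<noteq> j" using pick3[OF n3] by blast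
      obtain m where m: "m < n" "m \<noteq> i" "m \<noteq> l" using pick3[OF n3] by blast
      show ?thesis
      proof (cases "h = h'")
        case hh: True
        show ?thesis
        proof (cases "i = j")
          case True
          hence "c = (\<not> b)" using ne x y hh by auto
          thus ?thesis unfolding x y using V l m hh True
            by (intro le3[of _ "((l, \<not> b), h)" "((m, b), h)"]) (auto simp: E_iff)
        next
          case False
          hence "c = b" using nE x y hh V by (auto simp: E_iff)
          thus ?thesis unfolding x y using V l m hh False
            by (intro enat_le_trans3(2) le2[of _ "((l, \<not> b), h)"]) (auto simp: E_iff)
        qed
      next
        case hh: False
        show ?thesis
        proof (cases "EH h h'")
          case eh: True
          show ?thesis
          proof (cases "i = j")
            case True
            hence "c = (\<not> b)" using nE x y eh by (auto simp: E_iff)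
            thus ?thesis unfolding x y using V l m hh True eh
              by (intro le3[of _ "((l, \<not> b), h)" "((m, b), h)"]) (auto simp: E_iff)
          next
            case False
            hence "c = b" using nE x y eh V by (auto simp: E_iff)
            thus ?thesis unfolding x y using V l m hh False eh
              by (intro enat_le_trans3(2) le2[of _ "((l, \<not> b), h)"]) (auto simp: E_iff)
          qed
        next
          case neh: False
          show ?thesis
          proof (cases "i = j \<and> b = c")
            case True
            thus ?thesis unfolding x y using V l m hh neh
              by (intro le3[of _ "((l, \<not> b), h)" "((m, \<not> b), h')"]) (auto simp: E_iff EH_commute)
          next
            case False
            hence "c = (\<not> b) \<and> i \<noteq> j" using nE x y neh hh V by (auto simp: E_iff)
            thus ?thesis unfolding x y using V l m hh neh
              by (intro le3[of _ "((i, \<not> b), h')" "((l, b), h')"]) (auto simp: E_iff)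
          qed
        qed
      qed
    qed
  qed
qed

lemma twinN: assumes "cnbh VH EH u = cnbh VH EH v"
  shows "t = u \<or> (t \<in> VH \<and> EH u t) \<longleftrightarrow> t = v \<or> (t \<in> VH \<and> EH v t)"
  using assms mem_cnbh[OF sg, of t u] mem_cnbh[OF sg, of t v] by blast

lemma compN: assumes "u \<in> VH" "v \<in> VH" "cnbh VH EH u \<inter> cnbh VH EH v = {}" "cnbh VH EH u \<union> cnbh VH EH v = VH"
   "t \<in> VH"
  shows "t = u \<or> EH u t \<longleftrightarrow> \<not> (t = v \<or> EH v t)"
  using assms mem_cnbh[OF sg, of t u] mem_cnbh[OF sg, of t v] by blast

lemma C2: assumes "i < n" "u \<in> VH" "v \<in> VH" "cnbh VH EH u = cnbh VH EH v"
  shows "3 \<le> d ((i,b),u) ((i,\<not>b),v)"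
proof (rule gdist_ge3)
  have uv: "u \<noteq> v \<Longrightarrow> EH u v" using twinN[OF assms(4), of v] by auto
  show "((i,b),u) \<noteq> ((i,\<not>b),v)" by simp
  show "\<not> (((i,b),u) \<in> V \<and> ((i,\<not>b),v) \<in> V \<and> E ((i,b),u) ((i,\<not>b),v))"
    using uv by (auto simp: E_iff)
  show "\<not> (\<exists>w. ((i,b),u) \<in> V \<and> w \<in> V \<and> ((i,\<not>b),v) \<in> V \<and> E ((i,b),u) w \<and> E w ((i,\<not>b),v))"
  proof
    assume "\<exists>w. ((i,b),u) \<in> V \<and> w \<in> V \<and> ((i,\<not>b),v) \<in> V \<and> E ((i,b),u) w \<and> E w ((i,\<not>b),v)"
    then obtain l c t where w: "l < n" "t \<in> VH" "E ((i,b),u) ((l,c),t)" "E ((l,c),t) ((i,\<not>b),v)"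
      by auto
    have N: "t = u \<or> (t \<in> VH \<and> EH u t) \<longleftrightarrow> t = v \<or> (t \<in> VH \<and> EH v t)" by (rule twinN[OF assms(4)])
    show False using w N assms by (auto simp: E_iff EH_commute)
  qed
qed

lemma C3: assumes "i < n" "u \<in> VH" "v \<in> VH"
  "cnbh VH EH u \<inter> cnbh VH EH v = {}" "cnbh VH EH u \<union> cnbh VH EH v = VH"
  shows "3 \<le> d ((i,b),u) ((i,b),v)"
proof (rule gdist_ge3)
  have uv: "u \<noteq> v" "\<not> EH u v" using compN[OF assms(2-5), of v] assms(3) by auto
  show "((i,b),u) \<noteq> ((i,b),v)" using uv by simp
  show "\<not> (((i,b),u) \<in> V \<and> ((i,b),v) \<in> V \<and> E ((i,b),u) ((i,b),v))"
    using uv by (auto simp: E_iff)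
  show "\<not> (\<exists>w. ((i,b),u) \<in> V \<and> w \<in> V \<and> ((i,b),v) \<in> V \<and> E ((i,b),u) w \<and> E w ((i,b),v))"
  proof
    assume "\<exists>w. ((i,b),u) \<in> V \<and> w \<in> V \<and> ((i,b),v) \<in> V \<and> E ((i,b),u) w \<and> E w ((i,b),v)"
    then obtain l c t where w: "l < n" "t \<in> VH" "E ((i,b),u) ((l,c),t)" "E ((l,c),t) ((i,b),v)"
      by auto
    have N: "t = u \<or> EH u t \<longleftrightarrow> \<not> (t = v \<or> EH v t)" by (rule compN[OF assms(2-5) w(2)])
    show False using w N assms by (auto simp: E_iff EH_commute)
  qed
qed

lemma T1: assumes "i < n" "u \<in> VH" "v \<in> VH" "cnbh VH EH u = cnbh VH EH v" "u \<noteq> v"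
   "w \<in> V" "E ((i,b),u) w" "w \<noteq> ((i,b),v)"
  shows "E w ((i,b),v)"
proof -
  obtain l c t where w: "w = ((l,c),t)" by (cases w) auto
  have tV: "t \<in> VH" "l < n" using assms(6) unfolding w by simp_all
  have N: "t = u \<or> (t \<in> VH \<and> EH u t) \<longleftrightarrow> t = v \<or> (t \<in> VH \<and> EH v t)" by (rule twinN[OF assms(4)])
  have uv: "EH u v" using twinN[OF assms(4), of v] assms(5) by auto
  show ?thesis using assms N uv tV unfolding w
    by (auto simp: E_iff EH_commute)
qed

lemma T4: assumes "i < n" "u \<in> VH" "v \<in> VH"
  "cnbh VH EH u \<inter> cnbh VH EH v = {}" "cnbh VH EH u \<union> cnbh VH EH v = VH"
   "w \<in> V" "E ((i,b),u) w" "w \<noteq> ((i,\<not>b),v)"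
  shows "E w ((i,\<not>b),v)"
proof -
  obtain l c t where w: "w = ((l,c),t)" by (cases w) auto
  have tV: "t \<in> VH" "l < n" using assms(6) unfolding w by simp_all
  have N: "t = u \<or> EH u t \<longleftrightarrow> \<not> (t = v \<or> EH v t)" by (rule compN[OF assms(2-5) tV(1)])
  have uv: "u \<noteq> v" "\<not> EH u v" using compN[OF assms(2-5), of v] assms(3) by auto
  show ?thesis using assms N uv tV unfolding w
    by (auto simp: E_iff EH_commute)
qed

lemma E_irr: "\<not> E x x" unfolding mod_prod_adj_def by (auto split: prod.splits)

lemma dsym: "d x y = d y x" by (rule gdist_sym[OF E_sym])

lemma eq1: assumes "x \<in> V" "y \<in> V" "E x y" shows "d x y = 1"
proof -
  have "x \<noteq> y"
  proof
    assume "x = y" with assms(3) E_irr show False by simp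
  qed
  thus ?thesis using le1[OF assms] gdist_ge1[of x y V E] by simp
qed

lemma eq2: assumes "x \<in> V" "a \<in> V" "y \<in> V" "E x a" "E a y" "x \<noteq> y" "\<not> E x y" shows "d x y = 2"
  using le2[OF assms(1-5)] gdist_ge2[of x y V E] assms(6,7) by simp

lemma eq3: assumes "i < n" "h \<in> VH" shows "d ((i,b),h) ((i,\<not>b),h) = 3"
  using diam[of "((i,b),h)" "((i,\<not>b),h)"] C2[OF assms(1,2,2) refl, of b] assms by simp

end

context mp begin

lemma class_mmd: assumes "i < n" "u \<in> VH" "v \<in> VH" "rel VH EH u v" "((i,b),u) \<noteq> ((i,c),v)"
  "w \<in> V" "E ((i,b),u) w"
  shows "d w ((i,c),v) \<le> d ((i,b),u) ((i,c),v)"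
proof -
  have wV: "d w ((i,c),v) \<le> 3" by (rule diam) (use assms in auto)
  have ge1: "1 \<le> d ((i,b),u) ((i,c),v)" by (rule gdist_ge1[OF assms(5)])
  show ?thesis
  proof (cases "cnbh VH EH u = cnbh VH EH v")
    case tw: True
    show ?thesis
    proof (cases "c = b")
      case True
      have uv: "u \<noteq> v" using assms(5) True by auto
      show ?thesis
      proof (cases "w = ((i,c),v)")
        case True thus ?thesis by (simp add: gdist_self)
      next
        case False
        hence "E w ((i,b),v)" using T1[OF assms(1-3) tw uv assms(6,7)] \<open>c = b\<close> by simp
        hence "d w ((i,b),v) \<le> 1" by (intro le1) (use assms in auto)
        hence "d w ((i,c),v) \<le> 1" using \<open>c = b\<close> by simp
        thus ?thesis using ge1 by (rule order_trans)
      qed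
    next
      case False
      hence "c = (\<not> b)" by auto
      hence "3 \<le> d ((i,b),u) ((i,c),v)" using C2[OF assms(1-3) tw] by simp
      with wV show ?thesis by (rule order_trans)
    qed
  next
    case False
    hence cp: "cnbh VH EH u \<inter> cnbh VH EH v = {}" "cnbh VH EH u \<union> cnbh VH EH v = VH"
      using assms(4) unfolding rel_def by auto
    show ?thesis
    proof (cases "c = b")
      case True
      hence "3 \<le> d ((i,b),u) ((i,c),v)" using C3[OF assms(1-3) cp] by simp
      with wV show ?thesis by (rule order_trans)
    next
      case False
      hence cb: "c = (\<not> b)" by auto
      show ?thesis
      proof (cases "w = ((i,c),v)")
        case True thus ?thesis by (simp add: gdist_self)
      next
        case False
        hence "E w ((i,\<not>b),v)" using T4[OF assms(1-3) cp assms(6,7)] cb by simp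
        hence "d w ((i,\<not>b),v) \<le> 1" by (intro le1) (use assms in auto)
        hence "d w ((i,c),v) \<le> 1" using cb by simp
        thus ?thesis using ge1 by (rule order_trans)
      qed
    qed
  qed
qed

lemma class_pair: assumes S: "strong_resolving V E S" and "i < n" "u \<in> VH" "v \<in> VH" "rel VH EH u v"
   "((i,b),u) \<noteq> ((i,c),v)"
  shows "((i,b),u) \<in> S \<or> ((i,c),v) \<in> S"
proof (rule mmd_pair[OF E_sym S])
  show "((i,b),u) \<in> V" "((i,c),v) \<in> V" "((i,b),u) \<noteq> ((i,c),v)" using assms by auto
  show "d a b' \<noteq> \<infinity>" if "a \<in> V" "b' \<in> V" for a b'
    using diam[OF that] by (cases "d a b'") (auto simp: numeral_eq_enat)
  show "d w ((i,c),v) \<le> d ((i,b),u) ((i,c),v)" if "((i,b),u) \<in> V" "w \<in> V" "E ((i,b),u) w" for w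
    by (rule class_mmd[OF assms(2-6) that(2,3)])
  show "d w ((i,b),u) \<le> d ((i,c),v) ((i,b),u)" if "((i,c),v) \<in> V" "w \<in> V" "E ((i,c),v) w" for w
  proof (rule class_mmd[OF assms(2,4,3) rel_sym[OF sg assms(5)] _ that(2,3)])
    show "((i,c),v) \<noteq> ((i,b),u)" using assms(6) by auto
  qed
qed

end

context mp begin

lemma nontwin: assumes "h \<in> VH" "h' \<in> VH" "\<not> rel VH EH h h'"
  obtains t where "t \<in> VH" "t = h \<or> EH h t" "t \<noteq> h'" "\<not> EH h' t"
  | t where "t \<in> VH" "t = h' \<or> EH h' t" "t \<noteq> h" "\<not> EH h t"
proof -
  have "cnbh VH EH h \<noteq> cnbh VH EH h'" using assms(3) unfolding rel_def by blast
  then obtain t where "t \<in> cnbh VH EH h \<and> t \<notin> cnbh VH EH h' \<or> t \<notin> cnbh VH EH h \<and> t \<in> cnbh VH EH h'"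
    by blast
  thus ?thesis using that assms(1,2) unfolding mem_cnbh[OF sg] by blast
qed

lemma noncomp: assumes "h \<in> VH" "h' \<in> VH" "\<not> rel VH EH h h'"
  obtains t where "t \<in> VH" "t = h \<or> EH h t" "t = h' \<or> EH h' t"
  | t where "t \<in> VH" "t \<noteq> h" "\<not> EH h t" "t \<noteq> h'" "\<not> EH h' t"
proof -
  have "\<not> (cnbh VH EH h \<inter> cnbh VH EH h' = {} \<and> cnbh VH EH h \<union> cnbh VH EH h' = VH)"
    using assms(3) unfolding rel_def by blast
  moreover have "cnbh VH EH h \<subseteq> VH" "cnbh VH EH h' \<subseteq> VH" using cnbh_sub[OF sg] assms by auto
  ultimately obtain t where "t \<in> cnbh VH EH h \<and> t \<in> cnbh VH EH h' \<or> t \<in> VH \<and> t \<notin> cnbh VH EH h \<and> t \<notin> cnbh VH EH h'"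
    by blast
  thus ?thesis using that assms(1,2) unfolding mem_cnbh[OF sg] by blast
qed

lemma upper_case:
  assumes V: "i < n" "j < n" "h \<in> VH" "h' \<in> VH" and ne: "((i,True),h) \<noteq> ((j,True),h')"
    and hr: "h = h' \<or> \<not> rel VH EH h h'"
  shows "\<exists>l t. ((l,False),t) \<in> V \<and>
     (d ((j,True),h') ((l,False),t) = d ((j,True),h') ((i,True),h) + d ((i,True),h) ((l,False),t) \<or>
      d ((i,True),h) ((l,False),t) = d ((i,True),h) ((j,True),h') + d ((j,True),h') ((l,False),t))"
proof -
  obtain l where l: "l < n" "l \<noteq> i" "l \<noteq> j" using pick3[OF n3] by blast
  show ?thesis
  proof (cases "h = h'")
    case hh: True
    hence ij: "i \<noteq> j" using ne by auto
    have "d ((i,True),h) ((j,True),h') = 2"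
      by (rule eq2[of _ "((l,False),h)"]) (use V l ij hh in \<open>auto simp: E_iff EH_commute\<close>)
    moreover have "d ((j,True),h') ((i,False),h) = 1"
      by (rule eq1) (use V ij hh in \<open>auto simp: E_iff EH_commute\<close>)
    moreover have "d ((i,True),h) ((i,False),h) = 3" using eq3[OF V(1,3), of True] by simp
    ultimately show ?thesis using V by (intro exI[of _ i] exI[of _ h]) simp
  next
    case hh: False
    hence nr: "\<not> rel VH EH h h'" using hr by auto
    show ?thesis
    proof (cases "i = j")
      case ij: True
      show ?thesis
      proof (cases "EH h h'")
        case eh: True
        from nontwin[OF V(3,4) nr] show ?thesis
        proof cases
          case (1 t)
          have "d ((j,True),h') ((l,False),t) = 2"
            by (rule eq2[of _ "((i,True),h)"]) (use V l ij hh eh 1 in \<open>auto simp: E_iff EH_commute\<close>)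
          moreover have "d ((j,True),h') ((i,True),h) = 1"
            by (rule eq1) (use V ij hh eh in \<open>auto simp: E_iff EH_commute\<close>)
          moreover have "d ((i,True),h) ((l,False),t) = 1"
            by (rule eq1) (use V l ij hh eh 1 in \<open>auto simp: E_iff EH_commute\<close>)
          ultimately show ?thesis using 1 l by (intro exI[of _ l] exI[of _ t]) simp
        next
          case (2 t)
          have "d ((i,True),h) ((l,False),t) = 2"
            by (rule eq2[of _ "((j,True),h')"]) (use V l ij hh eh 2 in \<open>auto simp: E_iff EH_commute\<close>)
          moreover have "d ((i,True),h) ((j,True),h') = 1"
            by (rule eq1) (use V ij hh eh in \<open>auto simp: E_iff EH_commute\<close>)
          moreover have "d ((j,True),h') ((l,False),t) = 1"
            by (rule eq1) (use V l ij hh eh 2 in \<open>auto simp: E_iff EH_commute\<close>)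
          ultimately show ?thesis using 2 l by (intro exI[of _ l] exI[of _ t]) simp
        qed
      next
        case neh: False
        have a: "d ((i,True),h) ((j,True),h') = 2"
        proof (rule noncomp[OF V(3,4) nr])
          fix t assume t: "t \<in> VH" "t = h \<or> EH h t" "t = h' \<or> EH h' t"
          show ?thesis
            by (rule eq2[of _ "((i,True),t)"]) (use V ij hh neh t in \<open>auto simp: E_iff EH_commute\<close>)
        next
          fix t assume t: "t \<in> VH" "t \<noteq> h" "\<not> EH h t" "t \<noteq> h'" "\<not> EH h' t"
          show ?thesis
            by (rule eq2[of _ "((l,True),t)"]) (use V l ij hh neh t in \<open>auto simp: E_iff EH_commute\<close>)
        qed
        have "d ((j,True),h') ((i,False),h) = 1"
          by (rule eq1) (use V ij hh neh in \<open>auto simp: E_iff EH_commute\<close>)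
        moreover have "d ((i,True),h) ((i,False),h) = 3" using eq3[OF V(1,3), of True] by simp
        ultimately show ?thesis using V a by (intro exI[of _ i] exI[of _ h]) simp
      qed
    next
      case ij: False
      show ?thesis
      proof (cases "EH h h'")
        case eh: True
        have "d ((i,True),h) ((j,True),h') = 2"
          by (rule eq2[of _ "((l,False),h)"]) (use V l ij hh eh in \<open>auto simp: E_iff EH_commute\<close>)
        moreover have "d ((j,True),h') ((i,False),h) = 1"
          by (rule eq1) (use V ij hh eh in \<open>auto simp: E_iff EH_commute\<close>)
        moreover have "d ((i,True),h) ((i,False),h) = 3" using eq3[OF V(1,3), of True] by simp
        ultimately show ?thesis using V by (intro exI[of _ i] exI[of _ h]) simp
      next
        case neh: False
        from nontwin[OF V(3,4) nr] show ?thesis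
        proof cases
          case (1 t)
          have "d ((j,True),h') ((l,False),t) = 2"
            by (rule eq2[of _ "((i,True),h)"]) (use V l ij hh neh 1 in \<open>auto simp: E_iff EH_commute\<close>)
          moreover have "d ((j,True),h') ((i,True),h) = 1"
            by (rule eq1) (use V ij hh neh in \<open>auto simp: E_iff EH_commute\<close>)
          moreover have "d ((i,True),h) ((l,False),t) = 1"
            by (rule eq1) (use V l ij hh neh 1 in \<open>auto simp: E_iff EH_commute\<close>)
          ultimately show ?thesis using 1 l by (intro exI[of _ l] exI[of _ t]) simp
        next
          case (2 t)
          have "d ((i,True),h) ((l,False),t) = 2"
            by (rule eq2[of _ "((j,True),h')"]) (use V l ij hh neh 2 in \<open>auto simp: E_iff EH_commute\<close>)
          moreover have "d ((i,True),h) ((j,True),h') = 1"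
            by (rule eq1) (use V ij hh neh in \<open>auto simp: E_iff EH_commute\<close>)
          moreover have "d ((j,True),h') ((l,False),t) = 1"
            by (rule eq1) (use V l ij hh neh 2 in \<open>auto simp: E_iff EH_commute\<close>)
          ultimately show ?thesis using 2 l by (intro exI[of _ l] exI[of _ t]) simp
        qed
      qed
    qed
  qed
qed

end

context mp begin

abbreviation "P \<equiv> part VH EH ` VH"
definition rep :: "'a set \<Rightarrow> 'a" where "rep T = (SOME h. h \<in> T)"
definition "Rset = (\<lambda>(i,T). ((i,True), rep T)) ` ({..<n} \<times> P)"

lemma rep_in: assumes "T \<in> P" shows "rep T \<in> T"
proof -
  from assms obtain u where "u \<in> VH" "T = part VH EH u" by blast
  hence "u \<in> T" using part_self[OF sg] by blast
  thus ?thesis unfolding rep_def by (rule someI)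
qed

lemma rep_VH: "T \<in> P \<Longrightarrow> rep T \<in> VH"
  using rep_in part_sub[OF sg] by blast

lemma rep_part: assumes "T \<in> P" shows "part VH EH (rep T) = T"
proof -
  from assms obtain u where u: "u \<in> VH" "T = part VH EH u" by blast
  show ?thesis using part_eq[OF sg u(1)] rep_in[OF assms] u(2) by simp
qed

lemma rep_rel: assumes "T \<in> P" "T' \<in> P" "rel VH EH (rep T) (rep T')" shows "T = T'"
proof -
  have v: "rep T' \<in> VH" by (rule rep_VH[OF assms(2)])
  have "rep T' \<in> part VH EH (rep T)" unfolding part_def using v assms(3) by simp
  hence "part VH EH (rep T') = part VH EH (rep T)" by (rule part_eq[OF sg rep_VH[OF assms(1)]])
  thus ?thesis unfolding rep_part[OF assms(1)] rep_part[OF assms(2)] by simp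
qed

lemma inj_R: "inj_on (\<lambda>(i,T). ((i,True), rep T)) ({..<n} \<times> P)"
  unfolding inj_on_def
proof (intro ballI impI)
  fix a b assume a: "a \<in> {..<n} \<times> P" "b \<in> {..<n} \<times> P"
    "(case a of (i, T) \<Rightarrow> ((i, True), rep T)) = (case b of (i, T) \<Rightarrow> ((i, True), rep T))"
  obtain i T where ai: "a = (i,T)" by (cases a) auto
  obtain j T' where bj: "b = (j,T')" by (cases b) auto
  have r: "rep T = rep T'" "i = j" using a(3) ai bj by auto
  have TP: "T \<in> P" "T' \<in> P" using a(1,2) ai bj by auto
  have "T = T'" using rep_part[OF TP(1)] rep_part[OF TP(2)] r(1) by metis
  thus "a = b" using ai bj r by simp
qed

lemma finP: "finite P" using sgE(1) by simp

lemma card_R: "card Rset = n * card P"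
  unfolding Rset_def using card_image[OF inj_R] by (simp add: card_cartesian_product)

lemma R_sub: "Rset \<subseteq> V"
  unfolding Rset_def using rep_VH by auto

lemma upper: "strong_resolving V E (V - Rset)"
  unfolding strong_resolving_def
proof (intro conjI ballI impI)
  show "V - Rset \<subseteq> V" by blast
  fix x y assume xy: "x \<in> V" "y \<in> V" "x \<noteq> y"
  show "\<exists>z\<in>V - Rset. d y z = d y x + d x z \<or> d x z = d x y + d y z"
  proof (cases "x \<in> Rset")
    case False
    thus ?thesis using xy by (intro bexI[of _ x]) (auto simp: gdist_self)
  next
    case xR: True
    show ?thesis
    proof (cases "y \<in> Rset")
      case False
      thus ?thesis using xy by (intro bexI[of _ y]) (auto simp: gdist_self)
    next
      case yR: True
      from xR obtain i T where x: "x = ((i,True), rep T)" "i < n" "T \<in> P" unfolding Rset_def by auto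
      from yR obtain j T' where y: "y = ((j,True), rep T')" "j < n" "T' \<in> P" unfolding Rset_def by auto
      have hr: "rep T = rep T' \<or> \<not> rel VH EH (rep T) (rep T')"
        using rep_rel[OF x(3) y(3)] by auto
      from upper_case[OF x(2) y(2) rep_VH[OF x(3)] rep_VH[OF y(3)] _ hr] xy(3) x(1) y(1)
      obtain l t where lt: "((l,False),t) \<in> V"
        "d y ((l,False),t) = d y x + d x ((l,False),t) \<or> d x ((l,False),t) = d x y + d y ((l,False),t)"
        by auto
      have "((l,False),t) \<notin> Rset" unfolding Rset_def by auto
      thus ?thesis using lt by blast
    qed
  qed
qed

lemma lower: assumes S: "strong_resolving V E S" shows "card V - n * card P \<le> card S"
proof -
  define cls where "cls x = (fst (fst x), part VH EH (snd x))" for x :: "(nat \<times> bool) \<times> 'a"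
  have SV: "S \<subseteq> V" using S unfolding strong_resolving_def by blast
  have inj: "inj_on cls (V - S)"
  proof (rule inj_onI, rule ccontr)
    fix x y assume a: "x \<in> V - S" "y \<in> V - S" "cls x = cls y" "x \<noteq> y"
    obtain i b u where x: "x = ((i,b),u)" by (cases x) auto
    obtain j c v where y: "y = ((j,c),v)" by (cases y) auto
    have V: "i < n" "u \<in> VH" "v \<in> VH" using a(1,2) x y by auto
    have ij: "j = i" and pp: "part VH EH u = part VH EH v" using a(3) x y unfolding cls_def by auto
    have "rel VH EH u v" by (rule part_rel[OF sg V(2,3) pp])
    from class_pair[OF S V(1-3) this, of b c] a(4) x y ij have "x \<in> S \<or> y \<in> S" by simp
    thus False using a by auto
  qed
  have "cls ` (V - S) \<subseteq> {..<n} \<times> P" unfolding cls_def by auto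
  hence "card (cls ` (V - S)) \<le> card ({..<n} \<times> P)"
    by (rule card_mono[rotated]) (simp add: finP)
  hence "card (V - S) \<le> n * card P" using card_image[OF inj] by (simp add: card_cartesian_product)
  moreover have "card (V - S) = card V - card S" using card_Diff_subset[OF finite_subset[OF SV finV] SV] .
  ultimately show ?thesis by linarith
qed

lemma sdim: "strong_metric_dim V E = card V - n * card P"
  unfolding strong_metric_dim_def
proof (rule Least_equality)
  have "card (V - Rset) = card V - card Rset"
    using card_Diff_subset[OF finite_subset[OF R_sub finV] R_sub] .
  thus "\<exists>S. strong_resolving V E S \<and> card S = card V - n * card P"
    using upper card_R by (intro exI[of _ "V - Rset"]) simp
next
  fix k assume "\<exists>S. strong_resolving V E S \<and> card S = k"
  thus "card V - n * card P \<le> k" using lower by blast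
qed

end

theorem mainTheorem12:
  fixes n :: nat and VH :: "'a set" and EH :: "'a \<Rightarrow> 'a \<Rightarrow> bool"
  assumes "n \<ge> 3"
    and "simple_graph VH EH"
    and "\<not> (\<exists>h\<in>VH. universal VH EH h)"
  shows "int (strong_metric_dim (Knn_M_verts n \<times> VH) (mod_prod_adj (Knn_M_adj n) EH))
     = 2 * int n * (\<Sum>T\<in>T_parts VH EH. int (card T)) - int n * int (card (T_parts VH EH))"
proof -
  interpret mp n VH EH using assms(1,2) by unfold_locales
  have tp: "T_parts VH EH = part VH EH ` VH" by (rule T_parts_eq[OF assms(2)])
  have "int (card VH) = int (\<Sum>T\<in>part VH EH ` VH. card T)" using sum_parts[OF assms(2)] by simp
  also have "\<dots> = (\<Sum>T\<in>part VH EH ` VH. int (card T))" by (rule of_nat_sum)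
  finally have s: "(\<Sum>T\<in>part VH EH ` VH. int (card T)) = int (card VH)" by simp
  have k: "card (part VH EH ` VH) \<le> card VH" by (rule card_parts_le[OF assms(2)])
  hence le: "n * card (part VH EH ` VH) \<le> 2 * n * card VH" by (simp add: mult_le_mono)
  have e: "strong_metric_dim (Knn_M_verts n \<times> VH) (mod_prod_adj (Knn_M_adj n) EH)
      = 2 * n * card VH - n * card (part VH EH ` VH)" using sdim cardV by simp
  have "int (2 * n * card VH - n * card (part VH EH ` VH)) = int (2 * n * card VH) - int (n * card (part VH EH ` VH))"
    by (rule of_nat_diff[OF le])
  also have "\<dots> = 2 * int n * int (card VH) - int n * int (card (part VH EH ` VH))" by simp
  finally show ?thesis unfolding e tp s .
qed


end
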